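(* Let $\mathcal{Y}=\mathbb{R}$, $K\ge1$, and $\alpha\in(0,1)$ with $(1-\alpha)K$ a positive integer. Let $q_k=1/K$ for all $k\in[K]$, and fix integers $n_1,\dots,n_K\ge1$ with $n_1=\min_k n_k$. Let the score function be $s(x,y)=y$, and let $\Pi_1,\dots,\Pi_K$ be distributions on $\mathcal{X}^1\times\mathbb{R}$ whose marginals on the response $Y$ are: $\textnormal{Unif}[0,1]$ for $k=1$; $\textnormal{Unif}[-1,0]$ for $k=2,\dots,(1-\alpha)K$; and $\textnormal{Unif}[1,2]$ for $k=(1-\alpha)K+1,\dots,K$. Suppose calibration data $(X_1,Y_1),\dots,(X_n,Y_n)$, $n=\sum_k n_k$, are generated independently with, for each $k$ and each $i\in\{n_1+\dots+n_{k-1}+1,\dots,n_1+\dots+n_k\}$, $X_i^0=k$ and $(X_i^1,Y_i)\sim\Pi_k$, and an independent test point satisfies $\mathbb{P}\{X^0_{n+1}=k\}=1/K$ and $(X^1_{n+1},Y_{n+1})\mid X^0_{n+1}=k\sim\Pi_k$. Then the GWCP prediction set $\widehat{C}_n$ (defined in the context) satisfies \[\mathbb{P}\{Y_{n+1}\in\widehat{C}_n(X_{n+1})\}=1-\alpha-\frac{1}{K(\min_k n_k+1)}.\]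
   Context: Features are $x=(x^0,x^1)\in[K]\times\mathcal{X}^1$ with $x^0$ the group label. For a probability distribution $\mu$ on $\mathbb{R}\cup\{+\infty\}$ and $\tau\in(0,1]$, $\textnormal{Quantile}_{\tau}(\mu)=\inf\{t\in\mathbb{R}\cup\{+\infty\}:\mu([-\infty,t])\ge\tau\}$; $\delta_s$ is the point mass at $s$. With $s_i=s(X_i,Y_i)$ and $\widehat{P}^{(k)}_{\textnormal{score}}=\frac{1}{n_k}\sum_{i\le n:\,X_i^0=k}\delta_{s_i}$, the GWCP set is $\widehat{C}_n(x)=\{y: s(x,y)\le\widehat{q}\}$ with $\widehat{q}=\textnormal{Quantile}_{1-\alpha}\big(\sum_{k=1}^K q_k\widehat{P}^{(k)}_{\textnormal{score}}\big)$. *)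

theory Defs
  imports "HOL-Probability.Probability"
begin

text \<open>Quantile of a (sub)probability distribution on the extended reals, given through
  its function t \<mapsto> mu([-infinity,t]):
  Quantile_tau(mu) = inf { t in R \<union> {+infinity} : mu([-infinity,t]) >= tau }.\<close>
definition Quantile :: "real \<Rightarrow> (ereal \<Rightarrow> real) \<Rightarrow> ereal" where
  "Quantile \<tau> F = Inf {t :: ereal. t \<noteq> -\<infinity> \<and> F t \<ge> \<tau>}"

definition group_size :: "nat \<Rightarrow> (nat \<Rightarrow> nat) \<Rightarrow> nat \<Rightarrow> nat" where
  "group_size n x0 k = card {i \<in> {1..n}. x0 i = k}"

text \<open>The measure  sum_k q_k Phat^(k)_score  evaluated on [-infinity,t], where
  Phat^(k)_score = (1/n_k) sum_{i \<le> n, X_i^0 = k} delta_{s_i}.\<close>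
definition mixture_score_cdf ::
  "nat \<Rightarrow> (nat \<Rightarrow> real) \<Rightarrow> nat \<Rightarrow> (nat \<Rightarrow> nat) \<Rightarrow> (nat \<Rightarrow> real) \<Rightarrow> ereal \<Rightarrow> real" where
  "mixture_score_cdf K q n x0 sc t =
     (\<Sum>k\<in>{1..K}. q k * ((1 / real (group_size n x0 k)) *
        real (card {i \<in> {1..n}. x0 i = k \<and> ereal (sc i) \<le> t})))"

text \<open>GWCP threshold qhat and prediction set Chat_n(x) = {y. s(x,y) \<le> qhat}.
  Calibration data: features X i = (X_i^0, X_i^1), responses Yd i, for i = 1..n.\<close>
definition gwcp_qhat ::
  "real \<Rightarrow> nat \<Rightarrow> (nat \<Rightarrow> real) \<Rightarrow> nat \<Rightarrow> (nat \<times> 'x \<Rightarrow> real \<Rightarrow> real)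
    \<Rightarrow> (nat \<Rightarrow> nat \<times> 'x) \<Rightarrow> (nat \<Rightarrow> real) \<Rightarrow> ereal" where
  "gwcp_qhat \<alpha> K q n s X Yd =
     Quantile (1 - \<alpha>) (mixture_score_cdf K q n (\<lambda>i. fst (X i)) (\<lambda>i. s (X i) (Yd i)))"

definition gwcp_set ::
  "real \<Rightarrow> nat \<Rightarrow> (nat \<Rightarrow> real) \<Rightarrow> nat \<Rightarrow> (nat \<times> 'x \<Rightarrow> real \<Rightarrow> real)
    \<Rightarrow> (nat \<Rightarrow> nat \<times> 'x) \<Rightarrow> (nat \<Rightarrow> real) \<Rightarrow> nat \<times> 'x \<Rightarrow> real set" where
  "gwcp_set \<alpha> K q n s X Yd x = {y. ereal (s x y) \<le> gwcp_qhat \<alpha> K q n s X Yd}"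

end

theory Submission
  imports Defs
begin

lemma quantile_char:
  fixes F :: "ereal \<Rightarrow> real" and y :: real
  assumes mono: "\<And>a b. a \<le> b \<Longrightarrow> F (ereal a) \<le> F (ereal b)"
  shows "ereal y \<le> Quantile \<tau> F \<longleftrightarrow> (\<forall>r::rat. of_rat r < y \<longrightarrow> F (ereal (of_rat r)) < \<tau>)"
proof
  assume H: "ereal y \<le> Quantile \<tau> F"
  show "\<forall>r::rat. of_rat r < y \<longrightarrow> F (ereal (of_rat r)) < \<tau>"
  proof (intro allI impI)
    fix r :: rat assume r: "of_rat r < y"
    show "F (ereal (of_rat r)) < \<tau>"
    proof (rule ccontr)
      assume "\<not> F (ereal (of_rat r)) < \<tau>"
      then have "ereal (of_rat r) \<in> {t :: ereal. t \<noteq> -\<infinity> \<and> F t \<ge> \<tau>}" by auto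
      then have "Quantile \<tau> F \<le> ereal (of_rat r)" unfolding Quantile_def by (rule Inf_lower)
      with H have "ereal y \<le> ereal (of_rat r)" by (rule order_trans)
      with r show False by auto
    qed
  qed
next
  assume H: "\<forall>r::rat. of_rat r < y \<longrightarrow> F (ereal (of_rat r)) < \<tau>"
  show "ereal y \<le> Quantile \<tau> F" unfolding Quantile_def
  proof (rule Inf_greatest)
    fix x assume x: "x \<in> {t :: ereal. t \<noteq> -\<infinity> \<and> F t \<ge> \<tau>}"
    show "ereal y \<le> x"
    proof (rule ccontr)
      assume "\<not> ereal y \<le> x"
      then have xy: "x < ereal y" by auto
      with x obtain t where t: "x = ereal t" by (cases x) auto
      with xy have "t < y" by auto
      then obtain q where q: "q \<in> \<rat>" "t < q" "q < y" using Rats_dense_in_real by blast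
      then obtain r where r: "q = of_rat r" by (auto elim: Rats_cases)
      have "\<tau> \<le> F x" using x by auto
      also have "F x \<le> F (ereal (of_rat r))" using t q r mono by auto
      finally show False using H q r by fastforce
    qed
  qed
qed

lemma cdf_mono:
  assumes "\<And>k. q k \<ge> 0" "a \<le> b"
  shows "mixture_score_cdf K q n x0 sc a \<le> mixture_score_cdf K q n x0 sc b"
  unfolding mixture_score_cdf_def
  using assms by (intro sum_mono mult_left_mono of_nat_mono card_mono) (auto intro: order_trans)

lemma block_cover:
  fixes nn :: "nat \<Rightarrow> nat"
  shows "i \<in> {1..(\<Sum>j\<in>{1..K}. nn j)} \<Longrightarrow>
    \<exists>k\<in>{1..K}. i \<in> {(\<Sum>j\<in>{1..<k}. nn j)+1..(\<Sum>j\<in>{1..k}. nn j)}"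
proof (induction K)
  case 0
  then show ?case by simp
next
  case (Suc K)
  show ?case
  proof (cases "i \<le> (\<Sum>j\<in>{1..K}. nn j)")
    case True
    then have "i \<in> {1..(\<Sum>j\<in>{1..K}. nn j)}" using Suc.prems by auto
    from Suc.IH[OF this] show ?thesis by force
  next
    case False
    have e: "{1..<Suc K} = {1..K}" by auto
    show ?thesis
      by (rule bexI[of _ "Suc K"]) (use False Suc.prems e in auto)
  qed
qed

lemma sum_lower:
  fixes c nn :: "nat \<Rightarrow> nat"
  assumes "1 \<le> m" "m \<le> K" "\<forall>k\<in>{1..m}. c k = nn k \<and> nn k \<ge> 1"
  shows "(\<Sum>k\<in>{1..K}. 1 / real K * (1 / real (nn k) * real (c k))) \<ge> real m / real K"
proof -
  have "(\<Sum>k\<in>{1..m}. 1 / real K * (1 / real (nn k) * real (c k))) = (\<Sum>k\<in>{1..m}. 1 / real K)"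
  proof (rule sum.cong[OF refl])
    fix k assume "k \<in> {1..m}"
    then have "c k = nn k" "nn k \<ge> 1" using assms(3) by auto
    then show "1 / real K * (1 / real (nn k) * real (c k)) = 1 / real K" by simp
  qed
  also have "\<dots> = real m / real K" by simp
  finally have e: "(\<Sum>k\<in>{1..m}. 1 / real K * (1 / real (nn k) * real (c k))) = real m / real K" .
  have "(\<Sum>k\<in>{1..m}. 1 / real K * (1 / real (nn k) * real (c k))) \<le>
        (\<Sum>k\<in>{1..K}. 1 / real K * (1 / real (nn k) * real (c k)))"
    using assms(2) by (intro sum_mono2) auto
  with e show ?thesis by simp
qed

lemma sum_upper:
  fixes c nn :: "nat \<Rightarrow> nat"
  assumes "1 \<le> m" "m \<le> K" "\<forall>k\<in>{1..K}. c k \<le> nn k \<and> nn k \<ge> 1" "c 1 < nn 1"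
    "\<forall>k\<in>{m+1..K}. c k = 0"
  shows "(\<Sum>k\<in>{1..K}. 1 / real K * (1 / real (nn k) * real (c k))) < real m / real K"
proof -
  let ?f = "\<lambda>k. 1 / real K * (1 / real (nn k) * real (c k))"
  have K0: "real K > 0" using assms by simp
  have split1: "{1..K} = {1..m} \<union> {m+1..K}" using assms by auto
  have "(\<Sum>k\<in>{1..K}. ?f k) = (\<Sum>k\<in>{1..m}. ?f k) + (\<Sum>k\<in>{m+1..K}. ?f k)"
    unfolding split1 by (rule sum.union_disjoint) auto
  also have "(\<Sum>k\<in>{m+1..K}. ?f k) = 0" using assms(5) by simp
  also have split2: "{1..m} = insert 1 {2..m}" using assms by auto
  have "(\<Sum>k\<in>{1..m}. ?f k) = ?f 1 + (\<Sum>k\<in>{2..m}. ?f k)"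
    unfolding split2 by (subst sum.insert) auto
  also have "?f 1 < 1 / real K"
  proof -
    have n1: "real (nn 1) \<ge> 1" using assms(3,2,1) by auto
    have "real (c 1) / real (nn 1) < 1" using assms(4) n1 by (simp add: divide_less_eq)
    then show ?thesis using K0 by (simp add: field_simps)
  qed
  also have "(\<Sum>k\<in>{2..m}. ?f k) \<le> (\<Sum>k\<in>{2..m}. 1 / real K)"
  proof (rule sum_mono)
    fix k assume k: "k \<in> {2..m}"
    then have "c k \<le> nn k" "nn k \<ge> 1" using assms(3,2) by auto
    then have "real (c k) / real (nn k) \<le> 1" by (simp add: divide_le_eq)
    then show "?f k \<le> 1 / real K" using K0 by (simp add: field_simps)
  qed
  also have "1 / real K + (\<Sum>k\<in>{2..m}. 1 / real K) = real m / real K"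
    using assms(1) K0 by (simp add: field_simps of_nat_diff)
  finally show ?thesis by simp
qed

lemma cond_integral:
  assumes Z: "Z \<in> measurable M N" and A: "A \<in> sets M" and Q: "sets Q = sets N"
    and eq: "\<And>C. C \<in> sets N \<Longrightarrow> emeasure M (A \<inter> (Z -` C \<inter> space M)) = c * emeasure Q C"
    and g: "g \<in> borel_measurable N"
  shows "(\<integral>\<^sup>+\<omega>. indicator A \<omega> * g (Z \<omega>) \<partial>M) = c * (\<integral>\<^sup>+x. g x \<partial>Q)"
proof -
  have gZ: "(\<lambda>\<omega>. g (Z \<omega>)) \<in> borel_measurable M" using measurable_compose[OF Z g] by simp
  have Zd: "Z \<in> measurable (density M (indicator A)) N"
    using Z by (simp add: measurable_cong_sets[OF sets_density refl])
  have "(\<integral>\<^sup>+\<omega>. indicator A \<omega> * g (Z \<omega>) \<partial>M) = (\<integral>\<^sup>+\<omega>. g (Z \<omega>) \<partial>density M (indicator A))"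
    by (rule nn_integral_density[symmetric]) (use A gZ in auto)
  also have "\<dots> = (\<integral>\<^sup>+x. g x \<partial>distr (density M (indicator A)) N Z)"
    by (rule nn_integral_distr[symmetric]) (use Zd g in auto)
  also have "distr (density M (indicator A)) N Z = scale_measure c Q"
  proof (rule measure_eqI)
    show "sets (distr (density M (indicator A)) N Z) = sets (scale_measure c Q)" using Q by simp
    fix C assume "C \<in> sets (distr (density M (indicator A)) N Z)"
    then have C: "C \<in> sets N" by simp
    have "emeasure (distr (density M (indicator A)) N Z) C = emeasure (density M (indicator A)) (Z -` C \<inter> space M)"
      using C Zd by (simp add: emeasure_distr)
    also have "\<dots> = emeasure M (A \<inter> (Z -` C \<inter> space M))"
      by (rule emeasure_restricted[OF A]) (use C Z in auto)
    also have "\<dots> = emeasure (scale_measure c Q) C" using eq[OF C] by simp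
    finally show "emeasure (distr (density M (indicator A)) N Z) C = emeasure (scale_measure c Q) C" .
  qed
  also have "(\<integral>\<^sup>+x. g x \<partial>scale_measure c Q) = c * (\<integral>\<^sup>+x. g x \<partial>Q)"
    by (rule nn_integral_scale_measure) (use g Q in \<open>simp add: measurable_cong_sets[OF Q refl]\<close>)
  finally show ?thesis .
qed

lemma int_poly:
  fixes N :: nat
  shows "(\<integral>\<^sup>+y. ennreal (indicator {0..1} y * (1 - y ^ N)) \<partial>lborel) = ennreal (1 - 1 / (real N + 1))"
proof -
  have "((\<lambda>y::real. 1 - y ^ N) has_integral ((\<lambda>y. y - y ^ Suc N / real (Suc N)) 1 - (\<lambda>y. y - y ^ Suc N / real (Suc N)) 0)) {0..1}"
  proof (rule fundamental_theorem_of_calculus)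
    fix x :: real assume "x \<in> {0..1}"
    have "((\<lambda>y. y - y ^ Suc N / real (Suc N)) has_field_derivative (1 - x ^ N)) (at x within {0..1})"
      apply (auto intro!: derivative_eq_intros simp del: of_nat_Suc)
      apply (cases N)
       apply (auto simp: field_simps)
      done
    then show "((\<lambda>y. y - y ^ Suc N / real (Suc N)) has_vector_derivative (1 - x ^ N)) (at x within {0..1})"
      by (simp add: has_real_derivative_iff_has_vector_derivative)
  qed simp
  then have "((\<lambda>y::real. 1 - y ^ N) has_integral (1 - 1 / (real N + 1))) {0..1}" by (simp add: add.commute)
  then show ?thesis
    by (rule nn_integral_has_integral_lebesgue[rotated]) (auto intro: power_le_one)
qed

theorem proposition2:
  fixes M :: "'w measure"
    and SX :: "'x measure"
    and Pk :: "nat \<Rightarrow> ('x \<times> real) measure"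
    and X0 :: "nat \<Rightarrow> 'w \<Rightarrow> nat" and X1 :: "nat \<Rightarrow> 'w \<Rightarrow> 'x" and Y :: "nat \<Rightarrow> 'w \<Rightarrow> real"
    and K m :: nat and \<alpha> :: real and nn :: "nat \<Rightarrow> nat" and n :: nat
  assumes K: "K \<ge> 1"
    and alpha: "0 < \<alpha>" "\<alpha> < 1"
    and m: "real m = (1 - \<alpha>) * real K" "m \<ge> 1"
    and nn_pos: "\<forall>k\<in>{1..K}. nn k \<ge> 1"
    and nn_min: "nn 1 = Min (nn ` {1..K})"
    and n_def: "n = (\<Sum>k\<in>{1..K}. nn k)"
    and Pi_prob: "\<forall>k\<in>{1..K}. prob_space (Pk k) \<and> sets (Pk k) = sets (SX \<Otimes>\<^sub>M borel)"
    and marg1: "distr (Pk 1) borel snd = uniform_measure lborel {0..1}"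
    and marg2: "\<forall>k\<in>{2..m}. distr (Pk k) borel snd = uniform_measure lborel {-1..0}"
    and marg3: "\<forall>k\<in>{m+1..K}. distr (Pk k) borel snd = uniform_measure lborel {1..2}"
    and M: "prob_space M"
    and indep: "prob_space.indep_vars M (\<lambda>_. count_space UNIV \<Otimes>\<^sub>M SX \<Otimes>\<^sub>M borel)
                  (\<lambda>i \<omega>. (X0 i \<omega>, X1 i \<omega>, Y i \<omega>)) {1..n+1}"
    and calib: "\<forall>k\<in>{1..K}. \<forall>i\<in>{(\<Sum>j\<in>{1..<k}. nn j) + 1 .. (\<Sum>j\<in>{1..k}. nn j)}.
                  (\<forall>\<omega>\<in>space M. X0 i \<omega> = k) \<and>
                  distr M (SX \<Otimes>\<^sub>M borel) (\<lambda>\<omega>. (X1 i \<omega>, Y i \<omega>)) = Pk k"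
    and test_group: "\<forall>k\<in>{1..K}. measure M {\<omega>\<in>space M. X0 (n+1) \<omega> = k} = 1 / real K"
    and test_cond: "\<forall>k\<in>{1..K}. \<forall>A\<in>sets (SX \<Otimes>\<^sub>M borel).
                  measure M {\<omega>\<in>space M. X0 (n+1) \<omega> = k \<and> (X1 (n+1) \<omega>, Y (n+1) \<omega>) \<in> A}
                  = (1 / real K) * measure (Pk k) A"
  shows "measure M {\<omega>\<in>space M.
            Y (n+1) \<omega> \<in> gwcp_set \<alpha> K (\<lambda>_. 1 / real K) n (\<lambda>x y. y)
                           (\<lambda>i. (X0 i \<omega>, X1 i \<omega>)) (\<lambda>i. Y i \<omega>) (X0 (n+1) \<omega>, X1 (n+1) \<omega>)}
         = 1 - \<alpha> - 1 / (real K * (real (Min (nn ` {1..K})) + 1))"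
proof -
  interpret P: prob_space M by (rule M)
  define S where "S k = (\<Sum>j\<in>{1..<k}. nn j)" for k
  define B where "B k = {S k + 1 .. S (Suc k)}" for k
  have SSuc: "S (Suc k) = (\<Sum>j\<in>{1..k}. nn j)" for k
    by (simp add: S_def atLeastLessThanSuc_atLeastAtMost)
  define n1 where "n1 = nn 1"
  have n1_pos: "n1 \<ge> 1" using nn_pos K by (auto simp: n1_def)
  have Min_eq: "Min (nn ` {1..K}) = n1" using nn_min by (simp add: n1_def)
  have S1: "S 1 = 0" by (simp add: S_def)
  have B1: "B 1 = {1..n1}" by (simp add: B_def S_def n1_def)
  have SSuc2: "k \<ge> 1 \<Longrightarrow> S (Suc k) = S k + nn k" for k
    by (simp add: S_def sum.atLeastLessThan_Suc)
  have cardB: "k \<ge> 1 \<Longrightarrow> card (B k) = nn k" for k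
    by (simp add: B_def SSuc2)
  have Smono: "k \<le> l \<Longrightarrow> S k \<le> S l" for k l
    unfolding S_def by (intro sum_mono2) auto
  have Bsub: "k \<in> {1..K} \<Longrightarrow> B k \<subseteq> {1..n}" for k
  proof -
    assume k: "k \<in> {1..K}"
    have "S (Suc k) \<le> S (Suc K)" using k by (intro Smono) auto
    then show ?thesis using k by (auto simp: B_def n_def SSuc)
  qed
  have calibB: "k \<in> {1..K} \<Longrightarrow> i \<in> B k \<Longrightarrow> (\<forall>\<omega>\<in>space M. X0 i \<omega> = k) \<and>
                  distr M (SX \<Otimes>\<^sub>M borel) (\<lambda>\<omega>. (X1 i \<omega>, Y i \<omega>)) = Pk k" for k i
  proof -
    assume k: "k \<in> {1..K}" and i: "i \<in> B k"
    have "i \<in> {(\<Sum>j\<in>{1..<k}. nn j) + 1 .. (\<Sum>j\<in>{1..k}. nn j)}"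
      using i unfolding B_def SSuc by (simp only: S_def)
    then show ?thesis using calib k by blast
  qed
  have cover: "i \<in> {1..n} \<Longrightarrow> \<exists>k\<in>{1..K}. i \<in> B k" for i
  proof -
    assume "i \<in> {1..n}"
    then have "i \<in> {1..(\<Sum>j\<in>{1..K}. nn j)}" by (simp add: n_def)
    from block_cover[OF this] obtain k where "k \<in> {1..K}"
      "i \<in> {(\<Sum>j\<in>{1..<k}. nn j)+1..(\<Sum>j\<in>{1..k}. nn j)}" by blast
    then show ?thesis unfolding B_def SSuc by (auto simp only: S_def)
  qed
  obtain \<omega>0 where \<omega>0: "\<omega>0 \<in> space M" using P.not_empty by blast
  have blk: "\<omega> \<in> space M \<Longrightarrow> k \<in> {1..K} \<Longrightarrow> {i\<in>{1..n}. X0 i \<omega> = k} = B k" for \<omega> k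
  proof -
    assume w: "\<omega> \<in> space M" and k: "k \<in> {1..K}"
    show ?thesis
    proof (intro equalityI subsetI)
      fix i assume "i \<in> {i\<in>{1..n}. X0 i \<omega> = k}"
      then have i: "i \<in> {1..n}" "X0 i \<omega> = k" by auto
      from cover[OF i(1)] obtain k' where "k' \<in> {1..K}" "i \<in> B k'" by blast
      with calibB w i show "i \<in> B k" by metis
    next
      fix i assume "i \<in> B k"
      then show "i \<in> {i\<in>{1..n}. X0 i \<omega> = k}" using Bsub[OF k] calibB[OF k] w by auto
    qed
  qed
  have m_lt: "m < K"
  proof -
    have "\<alpha> * real K > 0" using alpha K by simp
    then have "real m < real K" using m(1) by (simp add: algebra_simps)
    then show ?thesis by simp
  qed
  have tau: "1 - \<alpha> = real m / real K" using m(1) K by (simp add: field_simps)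
  have rvT: "i \<in> {1..n+1} \<Longrightarrow> (\<lambda>\<omega>. (X0 i \<omega>, X1 i \<omega>, Y i \<omega>)) \<in> measurable M (count_space UNIV \<Otimes>\<^sub>M SX \<Otimes>\<^sub>M borel)" for i
    using indep unfolding P.indep_vars_def by auto
  have mY: "i \<in> {1..n+1} \<Longrightarrow> Y i \<in> borel_measurable M" for i
    using measurable_compose[OF rvT[of i], of "\<lambda>x. snd (snd x)"] by simp
  have mX0: "i \<in> {1..n+1} \<Longrightarrow> X0 i \<in> measurable M (count_space UNIV)" for i
    using measurable_compose[OF rvT[of i], of "\<lambda>x. fst x"] by simp
  have mXY: "i \<in> {1..n+1} \<Longrightarrow> (\<lambda>\<omega>. (X1 i \<omega>, Y i \<omega>)) \<in> measurable M (SX \<Otimes>\<^sub>M borel)" for i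
    using measurable_compose[OF rvT[of i], of "\<lambda>x. snd x"] by simp
  define Fs where "Fs \<omega> t = (\<Sum>k\<in>{1..K}. 1 / real K * (1 / real (nn k) * real (card {i\<in>B k. ereal (Y i \<omega>) \<le> t})))" for \<omega> t
  have F_eq: "mixture_score_cdf K (\<lambda>_. 1 / real K) n (\<lambda>i. X0 i \<omega>) (\<lambda>i. Y i \<omega>) = Fs \<omega>"
    if w: "\<omega> \<in> space M" for \<omega>
  proof
    fix t
    show "mixture_score_cdf K (\<lambda>_. 1 / real K) n (\<lambda>i. X0 i \<omega>) (\<lambda>i. Y i \<omega>) t = Fs \<omega> t"
      unfolding mixture_score_cdf_def Fs_def group_size_def
    proof (intro sum.cong refl)
      fix k assume k: "k \<in> {1..K}"
      have e1: "{i \<in> {1..n}. X0 i \<omega> = k \<and> ereal (Y i \<omega>) \<le> t} = {i\<in>B k. ereal (Y i \<omega>) \<le> t}"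
        using blk[OF w k] by blast
      show "1 / real K * (1 / real (card {i \<in> {1..n}. X0 i \<omega> = k}) *
           real (card {i \<in> {1..n}. X0 i \<omega> = k \<and> ereal (Y i \<omega>) \<le> t})) =
         1 / real K * (1 / real (nn k) * real (card {i \<in> B k. ereal (Y i \<omega>) \<le> t}))"
        unfolding e1 blk[OF w k] using cardB k by simp
    qed
  qed
  have Fs_mono: "a \<le> b \<Longrightarrow> Fs \<omega> (ereal a) \<le> Fs \<omega> (ereal b)" for \<omega> a b
    unfolding Fs_def
    by (intro sum_mono mult_left_mono of_nat_mono card_mono) (auto simp: B_def intro: order_trans)
  define E where "E = {\<omega>\<in>space M.
            Y (n+1) \<omega> \<in> gwcp_set \<alpha> K (\<lambda>_. 1 / real K) n (\<lambda>x y. y)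
                           (\<lambda>i. (X0 i \<omega>, X1 i \<omega>)) (\<lambda>i. Y i \<omega>) (X0 (n+1) \<omega>, X1 (n+1) \<omega>)}"
  have Echar1: "(Y (n+1) \<omega> \<in> gwcp_set \<alpha> K (\<lambda>_. 1 / real K) n (\<lambda>x y. y)
                           (\<lambda>i. (X0 i \<omega>, X1 i \<omega>)) (\<lambda>i. Y i \<omega>) (X0 (n+1) \<omega>, X1 (n+1) \<omega>))
      \<longleftrightarrow> (\<forall>r::rat. of_rat r < Y (n+1) \<omega> \<longrightarrow> Fs \<omega> (ereal (of_rat r)) < 1 - \<alpha>)"
    if w: "\<omega> \<in> space M" for \<omega>
  proof -
    have q: "ereal y \<le> Quantile (1 - \<alpha>) (Fs \<omega>) \<longleftrightarrow>
        (\<forall>r::rat. of_rat r < y \<longrightarrow> Fs \<omega> (ereal (of_rat r)) < 1 - \<alpha>)" for y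
      by (rule quantile_char) (rule Fs_mono)
    show ?thesis by (simp add: gwcp_set_def gwcp_qhat_def F_eq[OF w] q)
  qed
  have E_char: "E = {\<omega>\<in>space M. \<forall>r::rat. of_rat r < Y (n+1) \<omega> \<longrightarrow> Fs \<omega> (ereal (of_rat r)) < 1 - \<alpha>}"
    unfolding E_def using Echar1 by blast
  have card_sum: "real (card {i\<in>A. P i}) = (\<Sum>i\<in>A. if P i then 1 else 0)" if "finite A" for A :: "nat set" and P
    using that by (simp add: sum.inter_filter[symmetric])
  have Fs_meas: "(\<lambda>\<omega>. Fs \<omega> (ereal r)) \<in> borel_measurable M" for r
  proof -
    have "(\<lambda>\<omega>. Fs \<omega> (ereal r)) = (\<lambda>\<omega>. \<Sum>k\<in>{1..K}. 1 / real K * (1 / real (nn k) *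
        (\<Sum>i\<in>B k. if Y i \<omega> \<le> r then 1 else 0)))"
      unfolding Fs_def by (subst card_sum) (auto simp: B_def)
    also have "\<dots> \<in> borel_measurable M"
    proof (intro borel_measurable_sum borel_measurable_times borel_measurable_const)
      fix k i assume k: "k \<in> {1..K}" and i: "i \<in> B k"
      then have "i \<in> {1..n+1}" using Bsub[OF k] by auto
      then have [measurable]: "Y i \<in> borel_measurable M" by (rule mY)
      show "(\<lambda>\<omega>. if Y i \<omega> \<le> r then 1 else 0 :: real) \<in> borel_measurable M" by measurable
    qed
    finally show ?thesis .
  qed
  have E_sets: "E \<in> sets M"
    unfolding E_char
  proof (rule sets.sets_Collect_countable_All)
    fix r :: rat
    have [measurable]: "Y (n+1) \<in> borel_measurable M" by (rule mY) auto
    have [measurable]: "(\<lambda>\<omega>. Fs \<omega> (ereal (of_rat r))) \<in> borel_measurable M" by (rule Fs_meas)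
    show "{\<omega> \<in> space M. of_rat r < Y (n+1) \<omega> \<longrightarrow> Fs \<omega> (ereal (of_rat r)) < 1 - \<alpha>} \<in> sets M"
      by measurable
  qed
  define R where "R k y = (if k = 1 then 0 \<le> y \<and> y \<le> (1::real) else if k \<le> m then y \<le> 0 else 1 \<le> y)" for k y
  define M1 where "M1 \<omega> = Max ((\<lambda>i. Y i \<omega>) ` B 1)" for \<omega>
  define E' where "E' = {\<omega>\<in>space M. Y (n+1) \<omega> \<le> M1 \<omega>}"
  have AEG: "AE \<omega> in M. \<forall>k\<in>{1..K}. \<forall>i\<in>B k. R k (Y i \<omega>)"
  proof (intro eventually_ball_finite ballI)
    show "finite {1..K}" by simp
    fix k assume k: "k \<in> {1..K}"
    show "finite (B k)" by (simp add: B_def)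
    fix i assume i: "i \<in> B k"
    have i1: "i \<in> {1..n+1}" using Bsub[OF k] i by auto
    have "distr M borel (Y i) = distr (distr M (SX \<Otimes>\<^sub>M borel) (\<lambda>\<omega>. (X1 i \<omega>, Y i \<omega>))) borel snd"
      by (subst distr_distr) (auto simp: comp_def intro: mXY[OF i1])
    also have "\<dots> = distr (Pk k) borel snd" using calibB[OF k i] by simp
    finally have d: "distr M borel (Y i) = distr (Pk k) borel snd" .
    have "AE y in distr (Pk k) borel snd. R k y"
    proof (cases "k = 1")
      case True
      then show ?thesis unfolding marg1[unfolded True[symmetric]] R_def
        by (intro AE_uniform_measureI AE_I2) auto
    next
      case False
      show ?thesis
      proof (cases "k \<le> m")
        case True
        then have "k \<in> {2..m}" using False k by auto
        then show ?thesis using False True unfolding marg2[rule_format, OF \<open>k \<in> {2..m}\<close>] R_def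
          by (intro AE_uniform_measureI AE_I2) auto
      next
        case F2: False
        then have "k \<in> {m+1..K}" using k by auto
        then show ?thesis using False F2 unfolding marg3[rule_format, OF \<open>k \<in> {m+1..K}\<close>] R_def
          by (intro AE_uniform_measureI AE_I2) auto
      qed
    qed
    then have "AE y in distr M borel (Y i). R k y" by (simp only: d)
    then show "AE \<omega> in M. R k (Y i \<omega>)" by (rule AE_distrD[OF mY[OF i1]])
  qed
  have B1ne: "1 \<in> B 1" using n1_pos B1 by auto
  have onG: "\<omega> \<in> E \<longleftrightarrow> \<omega> \<in> E'"
    if w: "\<omega> \<in> space M" and G: "\<forall>k\<in>{1..K}. \<forall>i\<in>B k. R k (Y i \<omega>)" for \<omega>
  proof -
    have fin: "finite (B k)" for k by (simp add: B_def)
    have K1: "1 \<in> {1..K}" using K by auto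
    have "M1 \<omega> \<in> (\<lambda>i. Y i \<omega>) ` B 1"
      unfolding M1_def using fin B1ne by (intro Max_in) auto
    then obtain i0 where i0: "i0 \<in> B 1" "Y i0 \<omega> = M1 \<omega>" by auto
    have le_M1: "i \<in> B 1 \<Longrightarrow> Y i \<omega> \<le> M1 \<omega>" for i
      unfolding M1_def using fin by (intro Max_ge) auto
    have "R 1 (Y i0 \<omega>)" using G K1 i0(1) by blast
    then have M1_01: "0 \<le> M1 \<omega>" "M1 \<omega> \<le> 1" using i0(2) by (auto simp: R_def)
    have key: "Fs \<omega> (ereal t) < 1 - \<alpha> \<longleftrightarrow> t < M1 \<omega>" for t
    proof
      assume "Fs \<omega> (ereal t) < 1 - \<alpha>"
      show "t < M1 \<omega>"
      proof (rule ccontr)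
        assume "\<not> t < M1 \<omega>"
        then have tM: "M1 \<omega> \<le> t" by simp
        have "real m / real K \<le> Fs \<omega> (ereal t)" unfolding Fs_def
        proof (rule sum_lower)
          show "1 \<le> m" "m \<le> K" using m m_lt by auto
          show "\<forall>k\<in>{1..m}. card {i \<in> B k. ereal (Y i \<omega>) \<le> ereal t} = nn k \<and> 1 \<le> nn k"
          proof
            fix k assume k: "k \<in> {1..m}"
            then have kK: "k \<in> {1..K}" using m_lt by auto
            have "{i \<in> B k. ereal (Y i \<omega>) \<le> ereal t} = B k"
            proof (cases "k = 1")
              case True
              then have "\<forall>i\<in>B k. Y i \<omega> \<le> t" using le_M1 tM by (auto intro: order_trans)
              then show ?thesis by auto
            next
              case False
              then have "\<forall>i\<in>B k. Y i \<omega> \<le> 0" using G kK k by (auto simp: R_def)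
              then have "\<forall>i\<in>B k. Y i \<omega> \<le> t" using M1_01 tM by force
              then show ?thesis by auto
            qed
            then show "card {i \<in> B k. ereal (Y i \<omega>) \<le> ereal t} = nn k \<and> 1 \<le> nn k"
              using cardB kK nn_pos by auto
          qed
        qed
        with \<open>Fs \<omega> (ereal t) < 1 - \<alpha>\<close> tau show False by simp
      qed
    next
      assume tM: "t < M1 \<omega>"
      have "Fs \<omega> (ereal t) < real m / real K" unfolding Fs_def
      proof (rule sum_upper)
        show "1 \<le> m" "m \<le> K" using m m_lt by auto
        show "\<forall>k\<in>{1..K}. card {i \<in> B k. ereal (Y i \<omega>) \<le> ereal t} \<le> nn k \<and> 1 \<le> nn k"
        proof
          fix k assume k: "k \<in> {1..K}"
          have "card {i \<in> B k. ereal (Y i \<omega>) \<le> ereal t} \<le> card (B k)"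
            using fin by (rule card_mono) auto
          then show "card {i \<in> B k. ereal (Y i \<omega>) \<le> ereal t} \<le> nn k \<and> 1 \<le> nn k"
            using cardB[of k] nn_pos k by auto
        qed
        have "i0 \<notin> {i \<in> B 1. ereal (Y i \<omega>) \<le> ereal t}" using i0 tM by auto
        then have "{i \<in> B 1. ereal (Y i \<omega>) \<le> ereal t} \<subset> B 1" using i0(1) by blast
        then have "card {i \<in> B 1. ereal (Y i \<omega>) \<le> ereal t} < card (B 1)"
          using fin by (rule psubset_card_mono[rotated])
        then show "card {i \<in> B 1. ereal (Y i \<omega>) \<le> ereal t} < nn 1" using cardB by simp
        show "\<forall>k\<in>{m+1..K}. card {i \<in> B k. ereal (Y i \<omega>) \<le> ereal t} = 0"
        proof
          fix k assume k: "k \<in> {m+1..K}"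
          then have kK: "k \<in> {1..K}" "k \<noteq> 1" "\<not> k \<le> m" using m by auto
          have "\<forall>i\<in>B k. 1 \<le> Y i \<omega>"
          proof
            fix i assume "i \<in> B k"
            then have "R k (Y i \<omega>)" using G kK(1) by blast
            then show "1 \<le> Y i \<omega>" using kK by (simp add: R_def)
          qed
          then have "\<forall>i\<in>B k. t < Y i \<omega>" using M1_01 tM by force
          then have "{i \<in> B k. ereal (Y i \<omega>) \<le> ereal t} = {}" by force
          then show "card {i \<in> B k. ereal (Y i \<omega>) \<le> ereal t} = 0" by (metis card.empty)
        qed
      qed
      then show "Fs \<omega> (ereal t) < 1 - \<alpha>" using tau by simp
    qed
    have "\<omega> \<in> E \<longleftrightarrow> (\<forall>r::rat. of_rat r < Y (n+1) \<omega> \<longrightarrow> of_rat r < M1 \<omega>)"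
      unfolding E_char using w key by auto
    also have "\<dots> \<longleftrightarrow> Y (n+1) \<omega> \<le> M1 \<omega>"
    proof
      assume H: "\<forall>r::rat. of_rat r < Y (n+1) \<omega> \<longrightarrow> of_rat r < M1 \<omega>"
      show "Y (n+1) \<omega> \<le> M1 \<omega>"
      proof (rule ccontr)
        assume "\<not> Y (n+1) \<omega> \<le> M1 \<omega>"
        then obtain q where q: "q \<in> \<rat>" "M1 \<omega> < q" "q < Y (n+1) \<omega>"
          using Rats_dense_in_real[of "M1 \<omega>" "Y (n+1) \<omega>"] by auto
        then obtain r where "q = of_rat r" by (auto elim: Rats_cases)
        with H q show False by auto
      qed
    qed auto
    finally show ?thesis unfolding E'_def using w by simp
  qed
  have E'_sets: "E' \<in> sets M"
  proof -
    have [measurable]: "Y (n+1) \<in> borel_measurable M" by (rule mY) auto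
    have [measurable]: "M1 \<in> borel_measurable M" unfolding M1_def
      using Bsub[of 1] K by (intro borel_measurable_Max) (auto simp: B_def intro!: mY)
    show ?thesis unfolding E'_def by measurable
  qed
  have EE': "measure M E = measure M E'"
    by (rule measure_eq_AE[OF _ E_sets E'_sets]) (use AEG onG E_def E'_def in auto)
  define T where "T \<omega> = (X0 (n+1) \<omega>, Y (n+1) \<omega>)" for \<omega>
  define N3 where "N3 = (count_space UNIV \<Otimes>\<^sub>M SX \<Otimes>\<^sub>M borel :: (nat \<times> 'x \<times> real) measure)"
  define TR where "TR i \<omega> = (X0 i \<omega>, X1 i \<omega>, Y i \<omega>)" for i \<omega>
  have B1sub: "B 1 \<subseteq> {1..n}" using Bsub[of 1] K by auto
  have mM1: "M1 \<in> borel_measurable M" unfolding M1_def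
    using B1sub by (intro borel_measurable_Max) (auto simp: B_def intro!: mY)
  have ind1: "P.indep_var (PiM {n+1} (\<lambda>_. N3)) (\<lambda>\<omega>. restrict (\<lambda>i. TR i \<omega>) {n+1})
                           (PiM (B 1) (\<lambda>_. N3)) (\<lambda>\<omega>. restrict (\<lambda>i. TR i \<omega>) (B 1))"
    by (rule P.indep_var_restrict[OF indep[folded N3_def, folded TR_def]]) (use B1sub in auto)
  have f1: "(\<lambda>f. (fst (f (n+1)), snd (snd (f (n+1))))) \<in> measurable (PiM {n+1} (\<lambda>_. N3)) (count_space UNIV \<Otimes>\<^sub>M borel)"
    unfolding N3_def by measurable
  have f2: "(\<lambda>f. (0::nat, Max ((\<lambda>i. snd (snd (f i))) ` B 1))) \<in> measurable (PiM (B 1) (\<lambda>_. N3)) (count_space UNIV \<Otimes>\<^sub>M borel)"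
    unfolding N3_def by (intro measurable_Pair measurable_const borel_measurable_Max) (auto simp: B_def)
  have ind2: "P.indep_var (count_space UNIV \<Otimes>\<^sub>M borel) T (count_space UNIV \<Otimes>\<^sub>M borel) (\<lambda>\<omega>. (0::nat, M1 \<omega>))"
  proof -
    have "P.indep_var (count_space UNIV \<Otimes>\<^sub>M borel) ((\<lambda>f. (fst (f (n+1)), snd (snd (f (n+1))))) \<circ> (\<lambda>\<omega>. restrict (\<lambda>i. TR i \<omega>) {n+1}))
       (count_space UNIV \<Otimes>\<^sub>M borel) ((\<lambda>f. (0::nat, Max ((\<lambda>i. snd (snd (f i))) ` B 1))) \<circ> (\<lambda>\<omega>. restrict (\<lambda>i. TR i \<omega>) (B 1)))"
      by (rule P.indep_var_compose[OF ind1 f1 f2])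
    also have "((\<lambda>f. (fst (f (n+1)), snd (snd (f (n+1))))) \<circ> (\<lambda>\<omega>. restrict (\<lambda>i. TR i \<omega>) {n+1})) = T"
      by (auto simp: T_def TR_def fun_eq_iff)
    also have "((\<lambda>f. (0::nat, Max ((\<lambda>i. snd (snd (f i))) ` B 1))) \<circ> (\<lambda>\<omega>. restrict (\<lambda>i. TR i \<omega>) (B 1))) = (\<lambda>\<omega>. (0::nat, M1 \<omega>))"
    proof
      fix \<omega>
      have "(\<lambda>i. snd (snd (restrict (\<lambda>i. TR i \<omega>) (B 1) i))) ` B 1 = (\<lambda>i. Y i \<omega>) ` B 1"
        by (auto simp: TR_def)
      then show "((\<lambda>f. (0::nat, Max ((\<lambda>i. snd (snd (f i))) ` B 1))) \<circ> (\<lambda>\<omega>. restrict (\<lambda>i. TR i \<omega>) (B 1))) \<omega> = (0::nat, M1 \<omega>)"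
        by (simp add: M1_def)
    qed
    finally show ?thesis .
  qed
  define cl where "cl y = max 0 (min 1 y)" for y :: real
  define H where "H y = 1 - cl y ^ n1" for y
  have probY: "P.prob {\<omega>\<in>space M. Y i \<omega> < y} = cl y" if i: "i \<in> B 1" for i y
  proof -
    have i1: "i \<in> {1..n+1}" using B1sub i by auto
    have K1: "1 \<in> {1..K}" using K by auto
    have "P.prob {\<omega>\<in>space M. Y i \<omega> < y} = measure (distr M borel (Y i)) {..<y}"
      using mY[OF i1] by (subst measure_distr) (auto intro!: arg_cong[where f="P.prob"])
    also have "distr M borel (Y i) = distr (distr M (SX \<Otimes>\<^sub>M borel) (\<lambda>\<omega>. (X1 i \<omega>, Y i \<omega>))) borel snd"
      by (subst distr_distr) (auto simp: comp_def intro: mXY[OF i1])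
    also have "\<dots> = uniform_measure lborel {0..1}" using calibB[OF K1 i] marg1 by simp
    also have "measure (uniform_measure lborel {0..1}) {..<y} = measure lborel ({0..1} \<inter> {..<y})"
      by simp
    also have "\<dots> = cl y"
    proof (cases "y \<le> 0")
      case True
      then have "{0..1} \<inter> {..<y} = ({} :: real set)" by auto
      then show ?thesis using True by (simp add: cl_def)
    next
      case F: False
      show ?thesis
      proof (cases "y \<le> 1")
        case True
        then have "{0..1} \<inter> {..<y} = {0..<y}" by auto
        then show ?thesis using True F by (simp add: cl_def)
      next
        case False
        then have "{0..1} \<inter> {..<y} = {0..1}" by auto
        then show ?thesis using False by (simp add: cl_def)
      qed
    qed
    finally show ?thesis .
  qed
  have distM1: "emeasure M {\<omega>\<in>space M. y \<le> M1 \<omega>} = ennreal (H y)" for y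
  proof -
    have fin: "finite (B 1)" by (simp add: B_def)
    have B1ne': "B 1 \<noteq> {}" using B1ne by auto
    have lt: "{\<omega>\<in>space M. M1 \<omega> < y} = (\<Inter>i\<in>B 1. TR i -` (UNIV \<times> (space SX \<times> {..<y})) \<inter> space M)"
    proof -
      have sp: "\<omega> \<in> space M \<Longrightarrow> i \<in> B 1 \<Longrightarrow> X1 i \<omega> \<in> space SX" for \<omega> i
        using measurable_space[OF rvT, of i \<omega>] B1sub by (auto simp: space_pair_measure)
      show ?thesis using B1ne' sp fin by (auto simp: M1_def TR_def)
    qed
    have "P.prob {\<omega>\<in>space M. M1 \<omega> < y} = (\<Prod>i\<in>B 1. P.prob (TR i -` (UNIV \<times> (space SX \<times> {..<y})) \<inter> space M))"
      unfolding lt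
    proof (rule P.indep_varsD[OF indep[folded TR_def]])
      show "B 1 \<noteq> {}" "finite (B 1)" "B 1 \<subseteq> {1..n+1}" using B1ne' fin B1sub by auto
      fix i
      have "space SX \<times> {..<y} \<in> sets (SX \<Otimes>\<^sub>M borel)" by (intro pair_measureI) auto
      then show "UNIV \<times> (space SX \<times> {..<y}) \<in> sets (count_space UNIV \<Otimes>\<^sub>M SX \<Otimes>\<^sub>M borel)"
        by (intro pair_measureI) auto
    qed
    also have "\<dots> = (\<Prod>i\<in>B 1. cl y)"
    proof (rule prod.cong[OF refl])
      fix i assume i: "i \<in> B 1"
      have "TR i -` (UNIV \<times> (space SX \<times> {..<y})) \<inter> space M = {\<omega>\<in>space M. Y i \<omega> < y}"
        using measurable_space[OF rvT, of i] B1sub i by (auto simp: space_pair_measure TR_def)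
      then show "P.prob (TR i -` (UNIV \<times> (space SX \<times> {..<y})) \<inter> space M) = cl y"
        using probY[OF i] by simp
    qed
    also have "\<dots> = cl y ^ n1" using cardB[of 1] by (simp add: n1_def)
    finally have plt: "P.prob {\<omega>\<in>space M. M1 \<omega> < y} = cl y ^ n1" .
    have "{\<omega>\<in>space M. y \<le> M1 \<omega>} = space M - {\<omega>\<in>space M. M1 \<omega> < y}" by auto
    then have "P.prob {\<omega>\<in>space M. y \<le> M1 \<omega>} = 1 - cl y ^ n1"
      using plt P.prob_compl[of "{\<omega>\<in>space M. M1 \<omega> < y}"] mM1 by simp
    then show ?thesis by (simp add: P.emeasure_eq_measure H_def)
  qed
  define M1' where "M1' \<omega> = (0::nat, M1 \<omega>)" for \<omega>
  define NP where "NP = (count_space UNIV \<Otimes>\<^sub>M borel :: (nat \<times> real) measure)"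
  have hH[measurable]: "H \<in> borel_measurable borel" unfolding H_def cl_def by measurable
  have mT: "T \<in> measurable M NP" unfolding T_def NP_def
    using mX0[of "n+1"] mY[of "n+1"] by (intro measurable_Pair) auto
  have mM1': "M1' \<in> measurable M NP" unfolding M1'_def NP_def using mM1 by (intro measurable_Pair) auto
  interpret DT: prob_space "distr M NP T" by (rule P.prob_space_distr[OF mT])
  interpret DM: prob_space "distr M NP M1'" by (rule P.prob_space_distr[OF mM1'])
  have joint: "distr M NP T \<Otimes>\<^sub>M distr M NP M1' = distr M (NP \<Otimes>\<^sub>M NP) (\<lambda>\<omega>. (T \<omega>, M1' \<omega>))"
    using ind2 unfolding P.indep_var_distribution_eq M1'_def[symmetric] NP_def[symmetric] by blast
  define Sset where "Sset = {p \<in> space (NP \<Otimes>\<^sub>M NP). snd (fst p) \<le> snd (snd p)}"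
  have S_sets: "Sset \<in> sets (NP \<Otimes>\<^sub>M NP)" unfolding Sset_def NP_def by measurable
  have E'eq: "E' = (\<lambda>\<omega>. (T \<omega>, M1' \<omega>)) -` Sset \<inter> space M"
    unfolding E'_def Sset_def T_def M1'_def NP_def by (auto simp: space_pair_measure)
  have mTM: "(\<lambda>\<omega>. (T \<omega>, M1' \<omega>)) \<in> measurable M (NP \<Otimes>\<^sub>M NP)" using mT mM1' by (rule measurable_Pair)
  have sets_pp: "sets (distr M NP T \<Otimes>\<^sub>M distr M NP M1') = sets (NP \<Otimes>\<^sub>M NP)"
    by (rule sets_pair_measure_cong) simp_all
  have "emeasure M E' = emeasure (distr M (NP \<Otimes>\<^sub>M NP) (\<lambda>\<omega>. (T \<omega>, M1' \<omega>))) Sset"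
    unfolding E'eq by (rule emeasure_distr[symmetric, OF mTM S_sets])
  also have "\<dots> = emeasure (distr M NP T \<Otimes>\<^sub>M distr M NP M1') Sset" by (simp add: joint)
  also have "\<dots> = (\<integral>\<^sup>+t. emeasure (distr M NP M1') (Pair t -` Sset) \<partial>distr M NP T)"
    by (rule DM.emeasure_pair_measure_alt) (simp add: sets_pp S_sets)
  also have "\<dots> = (\<integral>\<^sup>+t. ennreal (H (snd t)) \<partial>distr M NP T)"
  proof (rule nn_integral_cong)
    fix t :: "nat \<times> real"
    have "Pair t -` Sset = {z. snd t \<le> snd z}"
      unfolding Sset_def NP_def by (auto simp: space_pair_measure)
    moreover have "{z. snd t \<le> snd z} \<in> sets NP"
    proof -
      have "{z \<in> space NP. snd t \<le> snd z} \<in> sets NP" unfolding NP_def by measurable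
      moreover have "{z. snd t \<le> snd z} = {z \<in> space NP. snd t \<le> snd z}"
        by (simp add: NP_def space_pair_measure)
      ultimately show ?thesis by simp
    qed
    ultimately have "emeasure (distr M NP M1') (Pair t -` Sset) = emeasure M (M1' -` {z. snd t \<le> snd z} \<inter> space M)"
      using mM1' by (simp add: emeasure_distr)
    also have "M1' -` {z. snd t \<le> snd z} \<inter> space M = {\<omega>\<in>space M. snd t \<le> M1 \<omega>}"
      by (auto simp: M1'_def)
    finally show "emeasure (distr M NP M1') (Pair t -` Sset) = ennreal (H (snd t))"
      using distM1 by simp
  qed
  also have "\<dots> = (\<integral>\<^sup>+\<omega>. ennreal (H (Y (n+1) \<omega>)) \<partial>M)"
    by (subst nn_integral_distr[OF mT]) (auto simp: T_def NP_def)
  finally have step1: "emeasure M E' = (\<integral>\<^sup>+\<omega>. ennreal (H (Y (n+1) \<omega>)) \<partial>M)" .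
  define Ak where "Ak k = {\<omega>\<in>space M. X0 (n+1) \<omega> = k}" for k
  have mX0t: "X0 (n+1) \<in> measurable M (count_space UNIV)" by (rule mX0) auto
  have Ak_sets: "Ak k \<in> sets M" for k
  proof -
    have "X0 (n+1) -` {k} \<inter> space M \<in> sets M" by (rule measurable_sets[OF mX0t]) auto
    moreover have "X0 (n+1) -` {k} \<inter> space M = Ak k" by (auto simp: Ak_def)
    ultimately show ?thesis by simp
  qed
  have pr1: "P.prob {\<omega>\<in>space M. X0 (n+1) \<omega> \<in> {1..K}} = 1"
  proof -
    have U: "(\<Union>k\<in>{1..K}. Ak k) = {\<omega>\<in>space M. X0 (n+1) \<omega> \<in> {1..K}}" by (auto simp: Ak_def)
    have "P.prob (\<Union>k\<in>{1..K}. Ak k) = (\<Sum>k\<in>{1..K}. P.prob (Ak k))"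
    proof (rule P.finite_measure_finite_Union)
      show "Ak ` {1..K} \<subseteq> P.events" using Ak_sets by auto
      show "disjoint_family_on Ak {1..K}" by (auto simp: disjoint_family_on_def Ak_def)
    qed simp
    also have "\<dots> = (\<Sum>k\<in>{1..K}. 1 / real K)"
      using test_group by (intro sum.cong) (auto simp: Ak_def)
    also have "\<dots> = 1" using K by simp
    finally show "P.prob {\<omega>\<in>space M. X0 (n+1) \<omega> \<in> {1..K}} = 1" using U by simp
  qed
  have AE_in: "AE \<omega> in M. X0 (n+1) \<omega> \<in> {1..K}"
    using P.AE_prob_1[OF pr1] by eventually_elim auto
  define I where "I k = (\<integral>\<^sup>+y. ennreal (H y) \<partial>distr (Pk k) borel snd)" for k
  have "(\<integral>\<^sup>+\<omega>. ennreal (H (Y (n+1) \<omega>)) \<partial>M) =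
        (\<integral>\<^sup>+\<omega>. (\<Sum>k\<in>{1..K}. indicator (Ak k) \<omega> * ennreal (H (Y (n+1) \<omega>))) \<partial>M)"
  proof (rule nn_integral_cong_AE)
    show "AE \<omega> in M. ennreal (H (Y (n+1) \<omega>)) = (\<Sum>k\<in>{1..K}. indicator (Ak k) \<omega> * ennreal (H (Y (n+1) \<omega>)))"
      using AE_in AE_space
    proof eventually_elim
      case (elim \<omega>)
      have "(\<Sum>k\<in>{1..K}. indicator (Ak k) \<omega> * ennreal (H (Y (n+1) \<omega>))) =
            (\<Sum>k\<in>{1..K}. if k = X0 (n+1) \<omega> then ennreal (H (Y (n+1) \<omega>)) else 0)"
        using elim by (intro sum.cong) (auto simp: Ak_def indicator_def)
      also have "\<dots> = ennreal (H (Y (n+1) \<omega>))" using elim by (simp add: sum.delta)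
      finally show ?case by simp
    qed
  qed
  also have "\<dots> = (\<Sum>k\<in>{1..K}. (\<integral>\<^sup>+\<omega>. indicator (Ak k) \<omega> * ennreal (H (Y (n+1) \<omega>)) \<partial>M))"
  proof (rule nn_integral_sum)
    fix k
    have [measurable]: "Y (n+1) \<in> borel_measurable M" by (rule mY) auto
    have [measurable]: "Ak k \<in> sets M" by (rule Ak_sets)
    show "(\<lambda>\<omega>. indicator (Ak k) \<omega> * ennreal (H (Y (n+1) \<omega>))) \<in> borel_measurable M" by measurable
  qed
  also have "\<dots> = (\<Sum>k\<in>{1..K}. ennreal (1 / real K) * I k)"
  proof (rule sum.cong[OF refl])
    fix k assume k: "k \<in> {1..K}"
    interpret Q: prob_space "Pk k" using Pi_prob k by auto
    have sQ: "sets (Pk k) = sets (SX \<Otimes>\<^sub>M borel)" using Pi_prob k by auto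
    have "(\<integral>\<^sup>+\<omega>. indicator (Ak k) \<omega> * ennreal (H (snd (X1 (n+1) \<omega>, Y (n+1) \<omega>))) \<partial>M) =
          ennreal (1 / real K) * (\<integral>\<^sup>+p. ennreal (H (snd p)) \<partial>Pk k)"
    proof (rule cond_integral[OF mXY Ak_sets sQ])
      show "n + 1 \<in> {1..n+1}" by simp
      show "(\<lambda>p. ennreal (H (snd p))) \<in> borel_measurable (SX \<Otimes>\<^sub>M borel)" by measurable
      fix C :: "('x \<times> real) set" assume C: "C \<in> sets (SX \<Otimes>\<^sub>M borel)"
      have "Ak k \<inter> ((\<lambda>\<omega>. (X1 (n+1) \<omega>, Y (n+1) \<omega>)) -` C \<inter> space M) =
            {\<omega>\<in>space M. X0 (n+1) \<omega> = k \<and> (X1 (n+1) \<omega>, Y (n+1) \<omega>) \<in> C}" by (auto simp: Ak_def)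
      moreover have "P.prob {\<omega>\<in>space M. X0 (n+1) \<omega> = k \<and> (X1 (n+1) \<omega>, Y (n+1) \<omega>) \<in> C} =
          1 / real K * measure (Pk k) C" using test_cond k C by blast
      ultimately show "emeasure M (Ak k \<inter> ((\<lambda>\<omega>. (X1 (n+1) \<omega>, Y (n+1) \<omega>)) -` C \<inter> space M)) =
            ennreal (1 / real K) * emeasure (Pk k) C"
        by (simp add: P.emeasure_eq_measure Q.emeasure_eq_measure ennreal_mult[symmetric])
    qed
    also have "(\<integral>\<^sup>+p. ennreal (H (snd p)) \<partial>Pk k) = I k"
      unfolding I_def
      by (rule nn_integral_distr[symmetric]) (auto simp: measurable_cong_sets[OF sQ refl])
    finally show "(\<integral>\<^sup>+\<omega>. indicator (Ak k) \<omega> * ennreal (H (Y (n+1) \<omega>)) \<partial>M) = ennreal (1 / real K) * I k"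
      by simp
  qed
  finally have step2: "emeasure M E' = (\<Sum>k\<in>{1..K}. ennreal (1 / real K) * I k)" using step1 by simp
  have Hle0: "y \<le> 0 \<Longrightarrow> H y = 1" for y using n1_pos by (simp add: H_def cl_def)
  have Hge1: "1 \<le> y \<Longrightarrow> H y = 0" for y by (simp add: H_def cl_def)
  have H01: "0 \<le> y \<Longrightarrow> y \<le> 1 \<Longrightarrow> H y = 1 - y ^ n1" for y by (simp add: H_def cl_def)
  have I1: "I 1 = ennreal (1 - 1 / (real n1 + 1))"
  proof -
    have "I 1 = (\<integral>\<^sup>+y. ennreal (H y) * indicator {0..1} y \<partial>lborel) / emeasure lborel {0..1::real}"
      unfolding I_def marg1 by (rule nn_integral_uniform_measure) auto
    also have "(\<integral>\<^sup>+y. ennreal (H y) * indicator {0..1} y \<partial>lborel) =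
        (\<integral>\<^sup>+y. ennreal (indicator {0..1} y * (1 - y ^ n1)) \<partial>lborel)"
      by (intro nn_integral_cong) (auto simp: H01 indicator_def)
    also have "\<dots> = ennreal (1 - 1 / (real n1 + 1))" by (rule int_poly)
    finally show ?thesis by (simp add: divide_ennreal_def)
  qed
  have I2: "I k = 1" if k: "k \<in> {2..m}" for k
  proof -
    have "I k = (\<integral>\<^sup>+y. ennreal (H y) * indicator {-1..0} y \<partial>lborel) / emeasure lborel {-1..0::real}"
      unfolding I_def marg2[rule_format, OF k] by (rule nn_integral_uniform_measure) auto
    also have "(\<integral>\<^sup>+y. ennreal (H y) * indicator {-1..0} y \<partial>lborel) = (\<integral>\<^sup>+y. indicator {-1..0::real} y \<partial>lborel)"
      by (intro nn_integral_cong) (auto simp: Hle0 indicator_def)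
    also have "\<dots> = 1" by simp
    finally show ?thesis by (simp add: divide_ennreal_def)
  qed
  have I3: "I k = 0" if k: "k \<in> {m+1..K}" for k
  proof -
    have "I k = (\<integral>\<^sup>+y. ennreal (H y) * indicator {1..2} y \<partial>lborel) / emeasure lborel {1..2::real}"
      unfolding I_def marg3[rule_format, OF k] by (rule nn_integral_uniform_measure) auto
    also have "(\<integral>\<^sup>+y. ennreal (H y) * indicator {1..2} y \<partial>lborel) = integral\<^sup>N lborel (\<lambda>y::real. 0)"
      by (intro nn_integral_cong) (auto simp: Hge1 indicator_def)
    finally show ?thesis by (simp add: divide_ennreal_def)
  qed
  define v where "v k = (if k = 1 then 1 - 1 / (real n1 + 1) else if k \<le> m then 1 else (0::real))" for k
  have v_nonneg: "0 \<le> v k" for k by (simp add: v_def)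
  have "(\<Sum>k\<in>{1..K}. ennreal (1 / real K) * I k) = (\<Sum>k\<in>{1..K}. ennreal (1 / real K * v k))"
  proof (rule sum.cong[OF refl])
    fix k assume k: "k \<in> {1..K}"
    have "I k = ennreal (v k)"
    proof (cases "k = 1")
      case True then show ?thesis using I1 by (simp add: v_def)
    next
      case False
      show ?thesis
      proof (cases "k \<le> m")
        case True
        then show ?thesis using False k I2[of k] by (simp add: v_def)
      next
        case F2: False
        then show ?thesis using False k I3[of k] by (simp add: v_def)
      qed
    qed
    then show "ennreal (1 / real K) * I k = ennreal (1 / real K * v k)"
      by (simp add: ennreal_mult[symmetric] v_nonneg)
  qed
  also have "\<dots> = ennreal (\<Sum>k\<in>{1..K}. 1 / real K * v k)"
    by (rule sum_ennreal) (simp add: v_nonneg)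
  also have "(\<Sum>k\<in>{1..K}. 1 / real K * v k) = 1 - \<alpha> - 1 / (real K * (real n1 + 1))"
  proof -
    have split1: "{1..K} = {1..m} \<union> {m+1..K}" using m_lt m by auto
    have split2: "{1..m} = insert 1 {2..m}" using m by auto
    have "(\<Sum>k\<in>{1..K}. v k) = (\<Sum>k\<in>{1..m}. v k) + (\<Sum>k\<in>{m+1..K}. v k)"
      unfolding split1 by (rule sum.union_disjoint) auto
    also have "(\<Sum>k\<in>{m+1..K}. v k) = 0" using m by (intro sum.neutral) (auto simp: v_def)
    also have "(\<Sum>k\<in>{1..m}. v k) = v 1 + (\<Sum>k\<in>{2..m}. v k)"
      unfolding split2 by (subst sum.insert) auto
    also have "(\<Sum>k\<in>{2..m}. v k) = real m - 1"
    proof -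
      have "(\<Sum>k\<in>{2..m}. v k) = (\<Sum>k\<in>{2..m}. 1)" by (intro sum.cong) (auto simp: v_def)
      then show ?thesis using m by (simp add: of_nat_diff)
    qed
    finally have sv: "(\<Sum>k\<in>{1..K}. v k) = 1 - 1 / (real n1 + 1) + (real m - 1)" by (simp add: v_def)
    have "(\<Sum>k\<in>{1..K}. 1 / real K * v k) = 1 / real K * (\<Sum>k\<in>{1..K}. v k)"
      by (simp add: sum_distrib_left)
    also have "\<dots> = 1 - \<alpha> - 1 / (real K * (real n1 + 1))"
    proof -
      have "1 - 1 / (real n1 + 1) + (real m - 1) = real m - 1 / (real n1 + 1)" by simp
      then have "1 / real K * (1 - 1 / (real n1 + 1) + (real m - 1)) = real m / real K - 1 / real K * (1 / (real n1 + 1))"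
        by (simp add: right_diff_distrib)
      also have "1 / real K * (1 / (real n1 + 1)) = 1 / (real K * (real n1 + 1))" by simp
      finally show ?thesis unfolding sv tau .
    qed
    finally show ?thesis .
  qed
  finally have step3: "emeasure M E' = ennreal (1 - \<alpha> - 1 / (real K * (real n1 + 1)))"
    using step2 by simp
  have "measure M E' = 1 - \<alpha> - 1 / (real K * (real n1 + 1))"
  proof -
    have "0 \<le> 1 - \<alpha> - 1 / (real K * (real n1 + 1))"
      using \<open>(\<Sum>k\<in>{1..K}. 1 / real K * v k) = 1 - \<alpha> - 1 / (real K * (real n1 + 1))\<close>
      by (metis sum_nonneg v_nonneg mult_nonneg_nonneg of_nat_0_le_iff zero_le_divide_1_iff)
    then show ?thesis using step3 by (simp add: measure_def)
  qed
  then show ?thesis using EE' Min_eq unfolding E_def by simp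
qed
end
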